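(* Let $(X,d)$ be a complete Busemann convex geodesic metric space which is uniformly convex with a modulus of uniform convexity that is monotone or lower semicontinuous from the right. Let $(A,B)$ be a closed convex pair of subsets of $X$ with $B$ bounded, and let $T:A\cup B\to A\cup B$ be a cyclic relatively nonexpansive mapping. Then there exists $(x,y)\in A\times B$ such that $d(x,Tx)=d(y,Ty)=\operatorname{dist}(A,B)$.
   Context: $\operatorname{dist}(A,B)=\inf\{d(x,y):x\in A,y\in B\}$. A geodesic space is one in which any two points are joined by a geodesic segment; a subset is convex if it contains every geodesic segment joining two of its points. $X$ is Busemann convex if for any geodesics $c_1:[0,l_1]\to X$, $c_2:[0,l_2]\to X$, $d(c_1(tl_1),c_2(tl_2))\le (1-t)d(c_1(0),c_2(0))+t\,d(c_1(l_1),c_2(l_2))$ for all $t\in[0,1]$. $X$ is uniformly convex if for every $r>0$ and $\varepsilon\in(0,2]$ there is $\delta\in(0,1]$ such that for all $a,x,y$ with $d(x,a)\le r$, $d(y,a)\le r$, $d(x,y)\ge\varepsilon r$, every midpoint $m$ of $x,y$ satisfies $d(m,a)\le(1-\delta)r$; a function $\delta(r,\varepsilon)$ providing such $\delta$ is a modulus of uniform convexity; it is monotone if it is decreasing in $r$ for each fixed $\varepsilon$, and lower semicontinuous from the right if it is lower semicontinuous from the right in $r$ for each fixed $\varepsilon$. $T$ is relatively nonexpansive if $d(Tx,Ty)\le d(x,y)$ for all $x\in A$, $y\in B$, and cyclic if $T(A)\subseteq B$, $T(B)\subseteq A$. *)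

theory Defs
  imports "HOL-Analysis.Analysis"
begin

definition geodesic :: "(real \<Rightarrow> 'a::metric_space) \<Rightarrow> real \<Rightarrow> bool" where
  "geodesic c l \<longleftrightarrow> 0 \<le> l \<and> (\<forall>s\<in>{0..l}. \<forall>t\<in>{0..l}. dist (c s) (c t) = \<bar>s - t\<bar>)"

definition geodesic_joining :: "(real \<Rightarrow> 'a::metric_space) \<Rightarrow> real \<Rightarrow> 'a \<Rightarrow> 'a \<Rightarrow> bool" where
  "geodesic_joining c l x y \<longleftrightarrow> geodesic c l \<and> c 0 = x \<and> c l = y"

definition geodesic_space :: "'a::metric_space itself \<Rightarrow> bool" where
  "geodesic_space _ \<longleftrightarrow> (\<forall>x y::'a. \<exists>c l. geodesic_joining c l x y)"

definition geod_convex :: "'a::metric_space set \<Rightarrow> bool" where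
  "geod_convex S \<longleftrightarrow> (\<forall>x\<in>S. \<forall>y\<in>S. \<forall>c l. geodesic_joining c l x y \<longrightarrow> c ` {0..l} \<subseteq> S)"

definition busemann_convex :: "'a::metric_space itself \<Rightarrow> bool" where
  "busemann_convex _ \<longleftrightarrow> (\<forall>(c1::real \<Rightarrow> 'a) l1 c2 l2. geodesic c1 l1 \<longrightarrow> geodesic c2 l2 \<longrightarrow>
     (\<forall>t\<in>{0..1}. dist (c1 (t * l1)) (c2 (t * l2))
        \<le> (1 - t) * dist (c1 0) (c2 0) + t * dist (c1 l1) (c2 l2)))"

definition is_midpoint :: "'a::metric_space \<Rightarrow> 'a \<Rightarrow> 'a \<Rightarrow> bool" where
  "is_midpoint m x y \<longleftrightarrow> dist x m = dist x y / 2 \<and> dist y m = dist x y / 2"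

definition modulus_uc :: "'a::metric_space itself \<Rightarrow> (real \<Rightarrow> real \<Rightarrow> real) \<Rightarrow> bool" where
  "modulus_uc _ \<delta> \<longleftrightarrow> (\<forall>r>0. \<forall>\<epsilon>. 0 < \<epsilon> \<and> \<epsilon> \<le> 2 \<longrightarrow>
      0 < \<delta> r \<epsilon> \<and> \<delta> r \<epsilon> \<le> 1 \<and>
      (\<forall>a x y m::'a. dist x a \<le> r \<longrightarrow> dist y a \<le> r \<longrightarrow> dist x y \<ge> \<epsilon> * r \<longrightarrow>
          is_midpoint m x y \<longrightarrow> dist m a \<le> (1 - \<delta> r \<epsilon>) * r))"

definition uniformly_convex :: "'a::metric_space itself \<Rightarrow> bool" where
  "uniformly_convex X \<longleftrightarrow> (\<exists>\<delta>. modulus_uc X \<delta>)"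

definition monotone_modulus :: "(real \<Rightarrow> real \<Rightarrow> real) \<Rightarrow> bool" where
  "monotone_modulus \<delta> \<longleftrightarrow> (\<forall>\<epsilon>. 0 < \<epsilon> \<and> \<epsilon> \<le> 2 \<longrightarrow>
      (\<forall>r s. 0 < r \<longrightarrow> r \<le> s \<longrightarrow> \<delta> s \<epsilon> \<le> \<delta> r \<epsilon>))"

definition lsc_right_modulus :: "(real \<Rightarrow> real \<Rightarrow> real) \<Rightarrow> bool" where
  "lsc_right_modulus \<delta> \<longleftrightarrow> (\<forall>\<epsilon>. 0 < \<epsilon> \<and> \<epsilon> \<le> 2 \<longrightarrow>
      (\<forall>r>0. \<forall>e>0. \<exists>h>0. \<forall>s. r < s \<and> s < r + h \<longrightarrow> \<delta> r \<epsilon> - e < \<delta> s \<epsilon>))"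

definition rel_nonexpansive :: "('a::metric_space \<Rightarrow> 'a) \<Rightarrow> 'a set \<Rightarrow> 'a set \<Rightarrow> bool" where
  "rel_nonexpansive T A B \<longleftrightarrow> (\<forall>x\<in>A. \<forall>y\<in>B. dist (T x) (T y) \<le> dist x y)"

definition cyclic_map :: "('a \<Rightarrow> 'a) \<Rightarrow> 'a set \<Rightarrow> 'a set \<Rightarrow> bool" where
  "cyclic_map T A B \<longleftrightarrow> T ` A \<subseteq> B \<and> T ` B \<subseteq> A"

end

theory Submission
  imports Defs "HOL-Analysis.Analysis"
begin


locale ucs =
  fixes \<delta> :: "real \<Rightarrow> real \<Rightarrow> real" and tX :: "'a::complete_space itself"
  assumes geo: "geodesic_space tX" and bus: "busemann_convex tX"
    and uc: "modulus_uc tX \<delta>" and mon: "monotone_modulus \<delta> \<or> lsc_right_modulus \<delta>"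
begin

lemma geod_len:
  assumes "geodesic_joining c l (x::'a) y" shows "dist x y = l"
proof -
  have "0 \<le> l" using assms unfolding geodesic_joining_def geodesic_def by auto
  hence "dist (c 0) (c l) = \<bar>0 - l\<bar>" using assms unfolding geodesic_joining_def geodesic_def by auto
  thus ?thesis using assms \<open>0 \<le> l\<close> unfolding geodesic_joining_def by auto
qed

lemma geod_mid:
  assumes "geodesic_joining c l (x::'a) y" shows "is_midpoint (c (l/2)) x y"
proof -
  have l: "0 \<le> l" and g: "\<forall>s\<in>{0..l}. \<forall>t\<in>{0..l}. dist (c s) (c t) = \<bar>s - t\<bar>"
    and e: "c 0 = x" "c l = y"
    using assms unfolding geodesic_joining_def geodesic_def by auto
  have "dist (c 0) (c (l/2)) = \<bar>0 - l/2\<bar>" using g l by auto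
  moreover have "dist (c l) (c (l/2)) = \<bar>l - l/2\<bar>" using g l by auto
  ultimately show ?thesis using geod_len[OF assms] l e unfolding is_midpoint_def by auto
qed

lemma conv_pts:
  assumes "geod_convex K" "x \<in> K" "y \<in> K" "geodesic_joining c l (x::'a) y" "s \<in> {0..l}"
  shows "c s \<in> K"
  using assms unfolding geod_convex_def by blast

lemma ex_geod: "\<exists>c l. geodesic_joining c l (x::'a) y"
  using geo unfolding geodesic_space_def by blast

lemma ex_mid:
  assumes "geod_convex K" "x \<in> K" "y \<in> K"
  shows "\<exists>m\<in>K. is_midpoint m (x::'a) y"
proof -
  obtain c l where g: "geodesic_joining c l x y" using ex_geod by blast
  have "0 \<le> l" using g unfolding geodesic_joining_def geodesic_def by auto
  thus ?thesis using conv_pts[OF assms g, of "l/2"] geod_mid[OF g] by auto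
qed

lemma bus_t:
  assumes "geodesic_joining c1 l1 (x1::'a) y1" "geodesic_joining c2 l2 x2 y2" "0 \<le> t" "t \<le> 1"
  shows "dist (c1 (t*l1)) (c2 (t*l2)) \<le> (1-t)*dist x1 x2 + t*dist y1 y2"
  using bus assms unfolding busemann_convex_def geodesic_joining_def by auto

lemma bus_max:
  assumes "geodesic_joining c1 l1 (x1::'a) y1" "geodesic_joining c2 l2 x2 y2" "s \<in> {0..l1}"
  shows "\<exists>s'\<in>{0..l2}. dist (c1 s) (c2 s') \<le> max (dist x1 x2) (dist y1 y2)"
proof (cases "l1 = 0")
  case True
  hence "s = 0" using assms(3) by auto
  moreover have "0 \<le> l2" using assms(2) unfolding geodesic_joining_def geodesic_def by auto
  ultimately show ?thesis using assms(1,2) unfolding geodesic_joining_def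
    by (intro bexI[of _ 0]) auto
next
  case False
  hence l1: "0 < l1" using assms(3) by auto
  define t where "t = s / l1"
  have t: "0 \<le> t" "t \<le> 1" using assms(3) l1 by (auto simp: t_def divide_simps)
  have s: "s = t * l1" using l1 by (simp add: t_def)
  have l2: "0 \<le> l2" using assms(2) unfolding geodesic_joining_def geodesic_def by auto
  have "dist (c1 s) (c2 (t*l2)) \<le> (1-t)*dist x1 x2 + t*dist y1 y2"
    using bus_t[OF assms(1,2) t] s by simp
  also have "\<dots> \<le> (1-t)*max (dist x1 x2) (dist y1 y2) + t*max (dist x1 x2) (dist y1 y2)"
    using t by (intro add_mono mult_left_mono) auto
  also have "\<dots> = max (dist x1 x2) (dist y1 y2)" by (simp add: algebra_simps)
  finally show ?thesis using t l2 by (intro bexI[of _ "t*l2"]) (auto simp: mult_left_le_one_le)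
qed

lemma cball_conv: "geod_convex (cball (p::'a) r)"
  unfolding geod_convex_def
proof (intro ballI allI impI subsetI)
  fix x y c l z assume x: "x \<in> cball p r" and y: "y \<in> cball p r" and g: "geodesic_joining c l x y"
    and z: "z \<in> c ` {0..l}"
  then obtain s where s: "s \<in> {0..l}" "z = c s" by auto
  have g2: "geodesic_joining (\<lambda>_. p) 0 p p" unfolding geodesic_joining_def geodesic_def by auto
  obtain s' where "dist (c s) p \<le> max (dist x p) (dist y p)" using bus_max[OF g g2 s(1)] by auto
  thus "z \<in> cball p r" using x y s by (auto simp: dist_commute)
qed

lemma Inter_conv: "(\<And>K. K \<in> F \<Longrightarrow> geod_convex K) \<Longrightarrow> geod_convex (\<Inter>F :: 'a set)"
  unfolding geod_convex_def by blast

lemma Int_conv: "geod_convex K \<Longrightarrow> geod_convex L \<Longrightarrow> geod_convex (K \<inter> (L::'a set))"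
  unfolding geod_convex_def by blast

lemma uc_apply:
  assumes "0 < r" "0 < e" "e \<le> 2" "dist x a \<le> r" "dist y a \<le> r" "e * r \<le> dist x y" "is_midpoint m x y"
  shows "dist m (a::'a) \<le> (1 - \<delta> r e) * r" "0 < \<delta> r e" "\<delta> r e \<le> 1"
  using uc assms unfolding modulus_uc_def by auto

lemma modulus_lb:
  assumes "0 < r0" "0 < e" "e \<le> 2"
  shows "\<exists>c0>0. \<exists>\<eta>>0. \<eta> \<le> 1 \<and> (\<forall>R. r0 \<le> R \<longrightarrow> R \<le> r0 + \<eta> \<longrightarrow> c0 \<le> \<delta> R e)"
  using mon
proof
  assume m: "monotone_modulus \<delta>"
  have p: "0 < \<delta> (r0+1) e" using uc assms unfolding modulus_uc_def by auto
  show ?thesis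
  proof (intro exI conjI allI impI)
    show "0 < \<delta> (r0+1) e" by (rule p)
    fix R assume "r0 \<le> R" "R \<le> r0 + 1"
    thus "\<delta> (r0+1) e \<le> \<delta> R e" using m assms unfolding monotone_modulus_def by auto
  qed auto
next
  assume l: "lsc_right_modulus \<delta>"
  define d0 where "d0 = \<delta> r0 e"
  have p: "0 < d0" using uc assms unfolding modulus_uc_def d0_def by auto
  obtain h where h: "h > 0" "\<forall>s. r0 < s \<and> s < r0 + h \<longrightarrow> d0 - d0/2 < \<delta> s e"
    using l assms p unfolding lsc_right_modulus_def d0_def
    by (metis half_gt_zero_iff)
  show ?thesis
  proof (intro exI conjI allI impI)
    show "0 < d0/2" using p by simp
    show "0 < min (h/2) 1" using h by simp
    fix R assume R: "r0 \<le> R" "R \<le> r0 + min (h/2) 1"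
    show "d0/2 \<le> \<delta> R e"
    proof (cases "R = r0")
      case True thus ?thesis using p by (simp add: d0_def)
    next
      case False
      hence "r0 < R \<and> R < r0 + h" using R h by auto
      thus ?thesis using h by force
    qed
  qed auto
qed

lemma mid_drop:
  assumes "0 < r0" "0 < \<epsilon>"
  shows "\<exists>c>0. \<exists>\<eta>>0. \<forall>a x y m R. R \<le> r0 + \<eta> \<longrightarrow> dist x a \<le> R \<longrightarrow> dist y a \<le> R
           \<longrightarrow> \<epsilon> \<le> dist x y \<longrightarrow> is_midpoint m x y \<longrightarrow> dist m (a::'a) \<le> max R r0 - c"
proof -
  define e where "e = min 2 (\<epsilon>/(r0+1))"
  have e: "0 < e" "e \<le> 2" using assms by (auto simp: e_def)
  obtain c0 \<eta> where c0: "c0 > 0" "\<eta> > 0" "\<eta> \<le> 1" "\<forall>R. r0 \<le> R \<longrightarrow> R \<le> r0 + \<eta> \<longrightarrow> c0 \<le> \<delta> R e"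
    using modulus_lb[OF assms(1) e] by blast
  have "\<forall>a x y m R. R \<le> r0 + \<eta> \<longrightarrow> dist x a \<le> R \<longrightarrow> dist y a \<le> R
           \<longrightarrow> \<epsilon> \<le> dist x y \<longrightarrow> is_midpoint m x y \<longrightarrow> dist m (a::'a) \<le> max R r0 - c0*r0"
  proof (intro allI impI)
    fix a x y m :: 'a and R :: real
    assume R: "R \<le> r0 + \<eta>" and xa: "dist x a \<le> R" and ya: "dist y a \<le> R"
      and xy: "\<epsilon> \<le> dist x y" and mid: "is_midpoint m x y"
    define R' where "R' = max R r0"
    have R': "r0 \<le> R'" "R' \<le> r0 + \<eta>" "0 < R'" using R assms c0(2) by (auto simp: R'_def)
    have "e * R' \<le> (\<epsilon>/(r0+1)) * (r0+1)"
      using R' c0(3) e assms by (intro mult_mono) (auto simp: e_def)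
    also have "\<dots> = \<epsilon>" using assms by simp
    finally have eR: "e * R' \<le> dist x y" using xy by simp
    have xa': "dist x a \<le> R'" and ya': "dist y a \<le> R'" using xa ya by (auto simp: R'_def)
    have "dist m a \<le> (1 - \<delta> R' e) * R'"
      using uc_apply(1)[of R' e x a y m] R'(3) e xa' ya' eR mid by blast
    also have "\<dots> \<le> (1 - c0) * R'" using c0(4) R' by (intro mult_right_mono) auto
    also have "\<dots> \<le> R' - c0 * r0" using R' c0 by (simp add: algebra_simps)
    finally show "dist m a \<le> max R r0 - c0 * r0" by (simp add: R'_def)
  qed
  moreover have "0 < c0*r0" using c0 assms by simp
  ultimately show ?thesis using c0(2) by blast
qed

lemma drop_contra:
  assumes "0 < r0" "0 < \<epsilon>"
  shows "\<exists>\<rho>>0. \<forall>x y m p. dist x p \<le> r0 + \<rho> \<longrightarrow> dist y p \<le> r0 + \<rho> \<longrightarrow> is_midpoint m x y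
           \<longrightarrow> r0 - \<rho> < dist m (p::'a) \<longrightarrow> dist x y < \<epsilon>"
proof -
  obtain c \<eta> where c: "c > 0" "\<eta> > 0" and h: "\<forall>a x y m R. R \<le> r0 + \<eta> \<longrightarrow> dist x a \<le> R \<longrightarrow> dist y a \<le> R
           \<longrightarrow> \<epsilon> \<le> dist x y \<longrightarrow> is_midpoint m x y \<longrightarrow> dist m (a::'a) \<le> max R r0 - c"
    using mid_drop[OF assms] by blast
  define \<rho> where "\<rho> = min \<eta> (c/2)"
  have "\<forall>x y m p. dist x p \<le> r0 + \<rho> \<longrightarrow> dist y p \<le> r0 + \<rho> \<longrightarrow> is_midpoint m x y
           \<longrightarrow> r0 - \<rho> < dist m (p::'a) \<longrightarrow> dist x y < \<epsilon>"
  proof (intro allI impI)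
    fix x y m p :: 'a
    assume a: "dist x p \<le> r0 + \<rho>" "dist y p \<le> r0 + \<rho>" "is_midpoint m x y" "r0 - \<rho> < dist m p"
    show "dist x y < \<epsilon>"
    proof (rule ccontr)
      assume "\<not> dist x y < \<epsilon>"
      moreover have "r0 + \<rho> \<le> r0 + \<eta>" by (simp add: \<rho>_def)
      ultimately have "dist m p \<le> max (r0 + \<rho>) r0 - c"
        using h[rule_format, of "r0+\<rho>" x p y m] a by linarith
      moreover have "max (r0 + \<rho>) r0 = r0 + \<rho>" using c by (auto simp: \<rho>_def)
      ultimately show False using a(4) by (auto simp: \<rho>_def)
    qed
  qed
  moreover have "\<rho> > 0" using c by (auto simp: \<rho>_def)
  ultimately show ?thesis by blast
qed

lemma infdist_approx:
  assumes "K \<noteq> {}" "0 < e"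
  shows "\<exists>a\<in>K. dist p a < infdist p K + e"
proof -
  have "Inf (dist p ` K) < infdist p K + e" using assms by (simp add: infdist_notempty)
  thus ?thesis using assms by (subst (asm) cINF_less_iff) auto
qed

lemma inv_suc_mono: "N \<le> m \<Longrightarrow> inverse (real (Suc m)) \<le> inverse (real (Suc N))"
  by (simp add: le_imp_inverse_le)

lemma nearest:
  assumes "K \<noteq> {}" "closed K" "geod_convex K"
  shows "\<exists>q\<in>K. dist (p::'a) q = infdist p K"
proof (cases "infdist p K = 0")
  case True
  hence "p \<in> K" using in_closed_iff_infdist_zero[OF assms(2,1)] by simp
  thus ?thesis using True by auto
next
  case False
  define r where "r = infdist p K"
  have r: "0 < r" using False infdist_nonneg[of p K] by (simp add: r_def)
  have lb: "\<And>z. z \<in> K \<Longrightarrow> r \<le> dist p z" by (simp add: r_def infdist_le)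
  have "\<forall>n. \<exists>z\<in>K. dist p z < r + inverse (real (Suc n))"
    using infdist_approx[OF assms(1)] by (simp add: r_def)
  then obtain z where z: "\<And>n. z n \<in> K" "\<And>n. dist p (z n) < r + inverse (real (Suc n))"
    by metis
  have "Cauchy z"
    unfolding Cauchy_def
  proof (intro allI impI)
    fix \<epsilon> :: real assume "0 < \<epsilon>"
    obtain \<rho> where \<rho>: "\<rho> > 0" and h: "\<forall>x y m q. dist x q \<le> r + \<rho> \<longrightarrow> dist y q \<le> r + \<rho> \<longrightarrow> is_midpoint m x y
           \<longrightarrow> r - \<rho> < dist m (q::'a) \<longrightarrow> dist x y < \<epsilon>"
      using drop_contra[OF r \<open>0 < \<epsilon>\<close>] by blast
    obtain N where N: "inverse (real (Suc N)) < \<rho>" using reals_Archimedean[OF \<rho>] by auto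
    have "\<forall>m\<ge>N. \<forall>n\<ge>N. dist (z m) (z n) < \<epsilon>"
    proof (intro allI impI)
      fix m n assume mn: "N \<le> m" "N \<le> n"
      obtain w where w: "w \<in> K" "is_midpoint w (z m) (z n)" using ex_mid[OF assms(3) z(1) z(1)] by blast
      have "dist p (z m) \<le> r + \<rho>" using z(2)[of m] inv_suc_mono[OF mn(1)] N by linarith
      moreover have "dist p (z n) \<le> r + \<rho>" using z(2)[of n] inv_suc_mono[OF mn(2)] N by linarith
      ultimately have "dist (z m) p \<le> r + \<rho>" "dist (z n) p \<le> r + \<rho>" by (simp_all add: dist_commute)
      moreover have "r - \<rho> < dist w p" using lb[OF w(1)] \<rho> by (simp add: dist_commute)
      ultimately show "dist (z m) (z n) < \<epsilon>" using h w(2) by blast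
    qed
    thus "\<exists>M. \<forall>m\<ge>M. \<forall>n\<ge>M. dist (z m) (z n) < \<epsilon>" by blast
  qed
  then obtain q where q: "z \<longlonglongrightarrow> q" using Cauchy_convergent_iff convergent_def by blast
  have qK: "q \<in> K" using closed_sequentially[OF assms(2) z(1) q] .
  have "(\<lambda>n. dist p (z n)) \<longlonglongrightarrow> dist p q" using tendsto_dist[OF tendsto_const q] .
  hence "dist p q \<le> r"
    using LIMSEQ_le[OF _ LIMSEQ_inverse_real_of_nat_add[of r]] z(2) less_imp_le by blast
  thus ?thesis using qK lb[OF qK] by (intro bexI[of _ q]) (auto simp: r_def)
qed

end



context ucs
begin

lemma chain_inter:
  assumes F: "F \<noteq> {}"
    and P: "\<And>K. K \<in> F \<Longrightarrow> K \<noteq> {} \<and> closed K \<and> geod_convex K \<and> bounded (K::'a set)"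
    and C: "\<And>K L. K \<in> F \<Longrightarrow> L \<in> F \<Longrightarrow> K \<subseteq> L \<or> L \<subseteq> K"
  shows "\<Inter>F \<noteq> {}"
proof -
  obtain K0 where K0: "K0 \<in> F" using F by auto
  obtain p where p: "p \<in> K0" using P[OF K0] by auto
  obtain M where M: "\<forall>y\<in>K0. dist p y \<le> M" using P[OF K0] bounded_any_center[of K0 p] by blast
  define f where "f K = infdist p K" for K
  have fle: "f K \<le> M" if K: "K \<in> F" for K
  proof -
    from C[OF K K0] show ?thesis
    proof
      assume "K \<subseteq> K0"
      moreover obtain z where "z \<in> K" using P[OF K] by auto
      ultimately have "dist p z \<le> M" using M by auto
      thus ?thesis using infdist_le[OF \<open>z \<in> K\<close>, of p] by (simp add: f_def)
    next
      assume "K0 \<subseteq> K"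
      hence "f K = 0" using p by (auto simp: f_def)
      moreover have "0 \<le> M" using M p by (metis dist_self)
      ultimately show ?thesis by simp
    qed
  qed
  have bdd: "bdd_above (f ` F)" using fle by (meson bdd_above.I2)
  define R where "R = Sup (f ` F)"
  have fR: "f K \<le> R" if "K \<in> F" for K using cSUP_upper[OF that bdd] by (simp add: R_def)
  have f0: "0 \<le> f K" for K by (simp add: f_def infdist_nonneg)
  show ?thesis
  proof (cases "R = 0")
    case True
    have "p \<in> \<Inter>F"
    proof
      fix K assume K: "K \<in> F"
      hence "f K = 0" using fR[OF K] f0[of K] True by simp
      thus "p \<in> K" using in_closed_iff_infdist_zero[of K p] P[OF K] by (simp add: f_def)
    qed
    thus ?thesis by auto
  next
    case False
    hence R: "0 < R" using fR[OF K0] f0[of K0] by simp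
    define q where "q K = (SOME z. z \<in> K \<and> dist p z = infdist p K)" for K
    have q: "q K \<in> K" "dist p (q K) = f K" if "K \<in> F" for K
    proof -
      have "\<exists>z. z \<in> K \<and> dist p z = infdist p K" using nearest[of K p] P[OF that] by auto
      hence "q K \<in> K \<and> dist p (q K) = infdist p K" unfolding q_def by (rule someI_ex)
      thus "q K \<in> K" "dist p (q K) = f K" by (auto simp: f_def)
    qed
    have claim: "\<exists>\<rho>>0. \<forall>K\<in>F. \<forall>L\<in>F. R - \<rho> < f K \<longrightarrow> R - \<rho> < f L \<longrightarrow> dist (q K) (q L) < \<epsilon>"
      if e: "0 < \<epsilon>" for \<epsilon>
    proof -
      obtain \<rho> where \<rho>: "\<rho> > 0" and h: "\<forall>x y m z. dist x z \<le> R + \<rho> \<longrightarrow> dist y z \<le> R + \<rho> \<longrightarrow> is_midpoint m x y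
           \<longrightarrow> R - \<rho> < dist m (z::'a) \<longrightarrow> dist x y < \<epsilon>"
        using drop_contra[OF R e] by blast
      have key: "dist (q K) (q L) < \<epsilon>" if KL: "K \<in> F" "L \<in> F" "K \<subseteq> L" "R - \<rho> < f L" for K L
      proof -
        have in1: "q K \<in> L" "q L \<in> L" using q(1)[OF KL(1)] q(1)[OF KL(2)] KL(3) by auto
        obtain w where w: "w \<in> L" "is_midpoint w (q K) (q L)"
          using ex_mid[OF _ in1] P[OF KL(2)] by blast
        have "dist (q K) p \<le> R + \<rho>" using q(2)[OF KL(1)] fR[OF KL(1)] \<rho> by (simp add: dist_commute)
        moreover have "dist (q L) p \<le> R + \<rho>" using q(2)[OF KL(2)] fR[OF KL(2)] \<rho> by (simp add: dist_commute)
        moreover have "R - \<rho> < dist w p"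
          using infdist_le[OF w(1), of p] KL(4) by (simp add: f_def dist_commute)
        ultimately show ?thesis using h w(2) by blast
      qed
      have "\<forall>K\<in>F. \<forall>L\<in>F. R - \<rho> < f K \<longrightarrow> R - \<rho> < f L \<longrightarrow> dist (q K) (q L) < \<epsilon>"
      proof (intro ballI impI)
        fix K L assume KL: "K \<in> F" "L \<in> F" "R - \<rho> < f K" "R - \<rho> < f L"
        from C[OF KL(1,2)] show "dist (q K) (q L) < \<epsilon>"
        proof
          assume "K \<subseteq> L" thus ?thesis using key KL by blast
        next
          assume "L \<subseteq> K" thus ?thesis using key[of L K] KL by (simp add: dist_commute)
        qed
      qed
      thus ?thesis using \<rho> by blast
    qed
    have "\<forall>n. \<exists>K\<in>F. R - inverse (real (Suc n)) < f K"
    proof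
      fix n
      have "R - inverse (real (Suc n)) < R" by simp
      thus "\<exists>K\<in>F. R - inverse (real (Suc n)) < f K"
        using less_cSUP_iff[OF F bdd] by (simp add: R_def)
    qed
    then obtain Ks where Ks: "\<And>n. Ks n \<in> F" "\<And>n. R - inverse (real (Suc n)) < f (Ks n)" by metis
    have near: "\<exists>N. \<forall>n\<ge>N. R - \<rho> < f (Ks n)" if rho: "0 < \<rho>" for \<rho>
    proof -
      obtain N where N: "inverse (real (Suc N)) < \<rho>" using reals_Archimedean[OF rho] by auto
      have "R - \<rho> < f (Ks n)" if "N \<le> n" for n
        using Ks(2)[of n] inv_suc_mono[OF that] N by linarith
      thus ?thesis by blast
    qed
    have "Cauchy (\<lambda>n. q (Ks n))"
      unfolding Cauchy_def
    proof (intro allI impI)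
      fix \<epsilon> :: real assume "0 < \<epsilon>"
      obtain \<rho> where \<rho>: "\<rho> > 0" "\<forall>K\<in>F. \<forall>L\<in>F. R - \<rho> < f K \<longrightarrow> R - \<rho> < f L \<longrightarrow> dist (q K) (q L) < \<epsilon>"
        using claim[OF \<open>0 < \<epsilon>\<close>] by blast
      obtain N where "\<forall>n\<ge>N. R - \<rho> < f (Ks n)" using near[OF \<rho>(1)] by blast
      hence "\<forall>m\<ge>N. \<forall>n\<ge>N. dist (q (Ks m)) (q (Ks n)) < \<epsilon>"
        using \<rho>(2) Ks(1) by (meson Ks(1))
      thus "\<exists>M. \<forall>m\<ge>M. \<forall>n\<ge>M. dist (q (Ks m)) (q (Ks n)) < \<epsilon>" by blast
    qed
    then obtain x where x: "(\<lambda>n. q (Ks n)) \<longlonglongrightarrow> x" using Cauchy_convergent_iff convergent_def by blast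
    have "x \<in> K" if K: "K \<in> F" for K
    proof -
      have PK: "K \<noteq> {}" "closed K" using P[OF K] by auto
      have lt: "infdist x K < 2 * \<epsilon>" if e: "0 < \<epsilon>" for \<epsilon>
      proof -
        obtain \<rho> where \<rho>: "\<rho> > 0" "\<forall>K\<in>F. \<forall>L\<in>F. R - \<rho> < f K \<longrightarrow> R - \<rho> < f L \<longrightarrow> dist (q K) (q L) < \<epsilon>"
          using claim[OF e] by blast
        obtain N1 where N1: "\<forall>n\<ge>N1. R - \<rho> < f (Ks n)" using near[OF \<rho>(1)] by blast
        obtain N2 where N2: "\<forall>n\<ge>N2. dist (q (Ks n)) x < \<epsilon>"
          using x e lim_sequentially[of "\<lambda>n. q (Ks n)" x] by blast
        define n where "n = max N1 N2"
        have n1: "R - \<rho> < f (Ks n)" using N1 by (simp add: n_def)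
        have n2: "dist (q (Ks n)) x < \<epsilon>" using N2 by (simp add: n_def)
        have Kn: "Ks n \<in> F" by (rule Ks(1))
        from C[OF Kn K] show ?thesis
        proof
          assume "Ks n \<subseteq> K"
          hence qin: "q (Ks n) \<in> K" using q(1)[OF Kn] by blast
          have "infdist x K \<le> dist x (q (Ks n))" by (rule infdist_le[OF qin])
          also have "\<dots> < \<epsilon>" using n2 by (simp add: dist_commute)
          finally show ?thesis using e by simp
        next
          assume sub: "K \<subseteq> Ks n"
          have "infdist p (Ks n) \<le> infdist p K" by (rule infdist_mono[OF sub PK(1)])
          hence "R - \<rho> < f K" using n1 unfolding f_def by linarith
          hence d: "dist (q K) (q (Ks n)) < \<epsilon>" using \<rho>(2) K Kn n1 by blast
          have "infdist x K \<le> dist x (q K)" by (rule infdist_le[OF q(1)[OF K]])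
          also have "\<dots> \<le> dist x (q (Ks n)) + dist (q K) (q (Ks n))" by (rule dist_triangle2)
          also have "\<dots> < 2 * \<epsilon>" using n2 d by (simp add: dist_commute)
          finally show ?thesis .
        qed
      qed
      have "infdist x K \<le> 0"
      proof (rule field_le_epsilon)
        fix e :: real assume "0 < e"
        hence "infdist x K < 2 * (e/2)" using lt[of "e/2"] by simp
        thus "infdist x K \<le> 0 + e" by simp
      qed
      hence "infdist x K = 0" using infdist_nonneg[of x K] by simp
      thus ?thesis using in_closed_iff_infdist_zero[OF PK(2) PK(1), of x] by simp
    qed
    thus ?thesis by auto
  qed
qed

end



context ucs
begin

lemma partner_unique:
  assumes "geod_convex Q" "y \<in> Q" "y' \<in> Q" "dist x y = D" "dist x y' = D" "\<forall>z\<in>Q. D \<le> dist (x::'a) z"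
  shows "y = y'"
proof (rule ccontr)
  assume ne: "y \<noteq> y'"
  have D0: "0 \<le> D" using assms(4) zero_le_dist[of x y] by simp
  show False
  proof (cases "D = 0")
    case True thus False using ne assms(4,5) by simp
  next
    case False
    hence D: "0 < D" using D0 by simp
    have e: "0 < dist y y'" using ne by simp
    obtain \<rho> where \<rho>: "\<rho> > 0" and h: "\<forall>a b m p. dist a p \<le> D + \<rho> \<longrightarrow> dist b p \<le> D + \<rho> \<longrightarrow> is_midpoint m a b
           \<longrightarrow> D - \<rho> < dist m (p::'a) \<longrightarrow> dist a b < dist y y'"
      using drop_contra[OF D e] by blast
    obtain w where w: "w \<in> Q" "is_midpoint w y y'" using ex_mid[OF assms(1-3)] by blast
    have "dist y x \<le> D + \<rho>" "dist y' x \<le> D + \<rho>" using assms(4,5) \<rho> by (simp_all add: dist_commute)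
    moreover have "D \<le> dist x w" using assms(6) w(1) by blast
    hence "D - \<rho> < dist w x" using \<rho> by (simp add: dist_commute)
    ultimately have "dist y y' < dist y y'" using h w(2) by blast
    thus False by simp
  qed
qed

lemma dec_chain:
  assumes "\<And>i j::nat. i \<le> j \<Longrightarrow> K j \<subseteq> K i"
  shows "\<And>X Y. X \<in> range K \<Longrightarrow> Y \<in> range K \<Longrightarrow> X \<subseteq> Y \<or> Y \<subseteq> X"
proof -
  fix X Y assume "X \<in> range K" "Y \<in> range K"
  then obtain i j where ij: "X = K i" "Y = K j" by blast
  show "X \<subseteq> Y \<or> Y \<subseteq> X"
  proof (cases "i \<le> j")
    case True thus ?thesis using assms[of i j] ij by simp
  next
    case False hence "j \<le> i" by linarith
    thus ?thesis using assms[of j i] ij by simp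
  qed
qed

lemma le_of_inv:
  assumes "\<And>j. (u::real) \<le> D + inverse (real (Suc j))" shows "u \<le> D"
proof (rule field_le_epsilon)
  fix e :: real assume "0 < e"
  then obtain j where "inverse (real (Suc j)) < e" using reals_Archimedean by blast
  thus "u \<le> D + e" using assms[of j] by linarith
qed

lemma shrink:
  assumes "closed Q" "geod_convex Q" "\<And>j. \<exists>y\<in>Q. dist x y \<le> D + inverse (real (Suc j))"
  shows "\<exists>y\<in>Q. dist (x::'a) y \<le> D"
proof -
  define K where "K j = Q \<inter> cball x (D + inverse (real (Suc j)))" for j
  have mono: "K j \<subseteq> K i" if ij: "i \<le> j" for i j
  proof
    fix y assume "y \<in> K j"
    hence y: "y \<in> Q" "dist x y \<le> D + inverse (real (Suc j))" by (auto simp: K_def)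
    moreover have "inverse (real (Suc j)) \<le> inverse (real (Suc i))" by (rule inv_suc_mono[OF ij])
    ultimately have "dist x y \<le> D + inverse (real (Suc i))" by linarith
    thus "y \<in> K i" using y(1) unfolding K_def by simp
  qed
  have "\<Inter>(range K) \<noteq> {}"
  proof (rule chain_inter)
    show "range K \<noteq> {}" by simp
    fix X assume "X \<in> range K"
    then obtain j where X: "X = K j" by auto
    show "X \<noteq> {} \<and> closed X \<and> geod_convex X \<and> bounded X"
    proof (intro conjI)
      show "X \<noteq> {}" unfolding X K_def using assms(3)[of j] by (auto simp: dist_commute)
      show "closed X" unfolding X K_def using assms(1) by (intro closed_Int closed_cball)
      show "geod_convex X" unfolding X K_def using assms(2) by (intro Int_conv cball_conv)
      show "bounded X" unfolding X K_def by (intro bounded_Int) simp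
    qed
  next
    fix X Y assume "X \<in> range K" "Y \<in> range K"
    thus "X \<subseteq> Y \<or> Y \<subseteq> X" using dec_chain[of K] mono by blast
  qed
  then obtain y where "y \<in> \<Inter>(range K)" by blast
  hence "y \<in> Q" "\<And>j. dist x y \<le> D + inverse (real (Suc j))" by (auto simp: K_def)
  thus ?thesis using le_of_inv by blast
qed

lemma partner_closed:
  assumes "closed S" "closed Q" "geod_convex Q" "\<forall>a\<in>S. \<forall>b\<in>Q. D \<le> dist a (b::'a)"
  shows "closed {x\<in>S. \<exists>y\<in>Q. dist x y = D}"
proof -
  let ?F = "{x\<in>S. \<exists>y\<in>Q. dist x y = D}"
  have "closure ?F \<subseteq> ?F"
  proof
    fix x assume x: "x \<in> closure ?F"
    have "closure ?F \<subseteq> S" using closure_mono[of ?F S] closure_closed[OF assms(1)] by blast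
    hence xS: "x \<in> S" using x by blast
    have "\<exists>y\<in>Q. dist x y \<le> D + inverse (real (Suc j))" for j
    proof -
      have ip: "0 < inverse (real (Suc j))" by simp
      obtain x' where x': "x' \<in> ?F" "dist x' x < inverse (real (Suc j))"
        using x ip unfolding closure_approachable by blast
      then obtain y where y: "y \<in> Q" "dist x' y = D" by blast
      have "dist x y \<le> dist x' x + dist x' y" by (rule dist_triangle3)
      thus ?thesis using x'(2) y by (intro bexI[of _ y]) auto
    qed
    then obtain y where y: "y \<in> Q" "dist x y \<le> D" using shrink[OF assms(2,3)] by blast
    moreover have "D \<le> dist x y" using assms(4) xS y(1) by blast
    ultimately have "dist x y = D" by simp
    thus "x \<in> ?F" using xS y by blast
  qed
  thus ?thesis using closure_subset_eq by blast
qed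

lemma partner_convex:
  assumes "geod_convex S" "geod_convex Q" "\<forall>a\<in>S. \<forall>b\<in>Q. D \<le> dist a (b::'a)"
  shows "geod_convex {x\<in>S. \<exists>y\<in>Q. dist x y = D}"
  unfolding geod_convex_def
proof (intro ballI allI impI subsetI)
  fix x1 x2 c l z
  assume x1: "x1 \<in> {x\<in>S. \<exists>y\<in>Q. dist x y = D}" and x2: "x2 \<in> {x\<in>S. \<exists>y\<in>Q. dist x y = D}"
    and g: "geodesic_joining c l x1 x2" and z: "z \<in> c ` {0..l}"
  obtain y1 y2 where y: "y1 \<in> Q" "dist x1 y1 = D" "y2 \<in> Q" "dist x2 y2 = D" using x1 x2 by blast
  obtain s where s: "s \<in> {0..l}" "z = c s" using z by blast
  obtain c' l' where g': "geodesic_joining c' l' y1 y2" using ex_geod by blast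
  obtain s' where s': "s' \<in> {0..l'}" "dist (c s) (c' s') \<le> max (dist x1 y1) (dist x2 y2)"
    using bus_max[OF g g' s(1)] by blast
  have zS: "z \<in> S" using conv_pts[OF assms(1) _ _ g s(1)] x1 x2 s(2) by blast
  have cQ: "c' s' \<in> Q" using conv_pts[OF assms(2) y(1) y(3) g' s'(1)] .
  have "D \<le> dist z (c' s')" using assms(3) zS cQ by blast
  moreover have "dist z (c' s') \<le> D" using s'(2) y(2,4) s(2) by simp
  ultimately have "dist z (c' s') = D" by simp
  thus "z \<in> {x\<in>S. \<exists>y\<in>Q. dist x y = D}" using zS cQ by blast
qed

lemma exist_prox:
  assumes "A \<noteq> {}" "B \<noteq> {}" "closed A" "closed B" "geod_convex A" "geod_convex B" "bounded B"
  shows "\<exists>a\<in>A. \<exists>b\<in>B. dist a (b::'a) = setdist A B"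
proof -
  define D where "D = setdist A B"
  define K where "K j = B \<inter> {b. infdist b A \<le> D + inverse (real (Suc j))}" for j
  have mono: "K j \<subseteq> K i" if ij: "i \<le> j" for i j
  proof
    fix y assume "y \<in> K j"
    hence y: "y \<in> B" "infdist y A \<le> D + inverse (real (Suc j))" by (auto simp: K_def)
    moreover have "inverse (real (Suc j)) \<le> inverse (real (Suc i))" by (rule inv_suc_mono[OF ij])
    ultimately have "infdist y A \<le> D + inverse (real (Suc i))" by linarith
    thus "y \<in> K i" using y(1) unfolding K_def by simp
  qed
  have conv: "geod_convex {b. infdist b A \<le> t}" for t
    unfolding geod_convex_def
  proof (intro ballI allI impI subsetI)
    fix b1 b2 c l z
    assume b1: "b1 \<in> {b. infdist b A \<le> t}" and b2: "b2 \<in> {b. infdist b A \<le> t}"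
      and g: "geodesic_joining c l b1 b2" and z: "z \<in> c ` {0..l}"
    obtain s where s: "s \<in> {0..l}" "z = c s" using z by blast
    have "infdist z A \<le> t + e" if e: "0 < e" for e
    proof -
      obtain a1 where a1: "a1 \<in> A" "dist b1 a1 < infdist b1 A + e" using infdist_approx[OF assms(1) e] by blast
      obtain a2 where a2: "a2 \<in> A" "dist b2 a2 < infdist b2 A + e" using infdist_approx[OF assms(1) e] by blast
      obtain c' l' where g': "geodesic_joining c' l' a1 a2" using ex_geod by blast
      obtain s' where s': "s' \<in> {0..l'}" "dist (c s) (c' s') \<le> max (dist b1 a1) (dist b2 a2)"
        using bus_max[OF g g' s(1)] by blast
      have cA: "c' s' \<in> A" using conv_pts[OF assms(5) a1(1) a2(1) g' s'(1)] .
      have "infdist z A \<le> dist z (c' s')" by (rule infdist_le[OF cA])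
      also have "\<dots> \<le> t + e" using s'(2) s(2) a1(2) a2(2) b1 b2 by auto
      finally show ?thesis .
    qed
    hence "infdist z A \<le> t" by (rule field_le_epsilon)
    thus "z \<in> {b. infdist b A \<le> t}" by simp
  qed
  have clo: "closed {b. infdist b A \<le> t}" for t
    by (intro closed_Collect_le continuous_on_infdist continuous_on_id continuous_on_const)
  have "\<Inter>(range K) \<noteq> {}"
  proof (rule chain_inter)
    show "range K \<noteq> {}" by simp
    fix X assume "X \<in> range K"
    then obtain j where X: "X = K j" by auto
    have "D < D + inverse (real (Suc j))" by simp
    then obtain a b where ab: "a \<in> A" "b \<in> B" "dist a b < D + inverse (real (Suc j))"
      using setdist_ltE[OF _ assms(1,2)] unfolding D_def by blast
    have "infdist b A \<le> D + inverse (real (Suc j))"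
      using infdist_le[OF ab(1), of b] ab(3) by (simp add: dist_commute)
    hence "K j \<noteq> {}" using ab(2) by (auto simp: K_def)
    thus "X \<noteq> {} \<and> closed X \<and> geod_convex X \<and> bounded X"
    proof (intro conjI)
      show "closed X" unfolding X K_def using assms(4) clo by (intro closed_Int)
      show "geod_convex X" unfolding X K_def using assms(6) conv by (intro Int_conv)
      show "bounded X" unfolding X K_def using assms(7) by (intro bounded_Int) simp
    qed (use X in simp)
  next
    fix X Y assume "X \<in> range K" "Y \<in> range K"
    thus "X \<subseteq> Y \<or> Y \<subseteq> X" using dec_chain[of K] mono by blast
  qed
  then obtain b where "b \<in> \<Inter>(range K)" by blast
  hence b: "b \<in> B" "\<And>j. infdist b A \<le> D + inverse (real (Suc j))" by (auto simp: K_def)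
  hence bD: "infdist b A \<le> D" using le_of_inv by blast
  obtain a where a: "a \<in> A" "dist b a = infdist b A" using nearest[OF assms(1,3,5)] by blast
  have "D \<le> dist a b" using setdist_le_dist[OF a(1) b(1)] by (simp add: D_def)
  hence "dist a b = D" using a bD by (simp add: dist_commute)
  thus ?thesis using a b unfolding D_def by blast
qed

end



locale bp = ucs \<delta> tX for \<delta> and tX :: "'a::complete_space itself" +
  fixes A B :: "'a set" and T :: "'a \<Rightarrow> 'a"
  assumes AB: "A \<noteq> {}" "B \<noteq> {}" "closed A" "closed B" "geod_convex A" "geod_convex B" "bounded B"
    and cyc: "cyclic_map T A B" and rne: "rel_nonexpansive T A B"
begin

definition "D = setdist A B"

definition "Sig = {(E,H). E \<subseteq> A \<and> H \<subseteq> B \<and> E \<noteq> {} \<and> H \<noteq> {} \<and> closed E \<and> closed H \<and>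
   geod_convex E \<and> geod_convex H \<and> bounded E \<and> bounded H \<and> T`E \<subseteq> H \<and> T`H \<subseteq> E \<and>
   (\<forall>x\<in>E. \<exists>y\<in>H. dist x y = D) \<and> (\<forall>y\<in>H. \<exists>x\<in>E. dist y x = D)}"

lemma Dle: "a \<in> A \<Longrightarrow> b \<in> B \<Longrightarrow> D \<le> dist a b"
  unfolding D_def by (rule setdist_le_dist)

lemma TA: "x \<in> A \<Longrightarrow> T x \<in> B" using cyc unfolding cyclic_map_def by blast
lemma TB: "x \<in> B \<Longrightarrow> T x \<in> A" using cyc unfolding cyclic_map_def by blast
lemma rne': "x \<in> A \<Longrightarrow> y \<in> B \<Longrightarrow> dist (T x) (T y) \<le> dist x y"
  using rne unfolding rel_nonexpansive_def by blast

lemma Tprox: assumes "x \<in> A" "y \<in> B" "dist x y = D" shows "dist (T y) (T x) = D"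
proof -
  have "D \<le> dist (T y) (T x)" using Dle[OF TB[OF assms(2)] TA[OF assms(1)]] .
  moreover have "dist (T y) (T x) \<le> D" using rne'[OF assms(1,2)] assms(3) by (simp add: dist_commute)
  ultimately show ?thesis by simp
qed

lemma uA: "x \<in> A \<Longrightarrow> y \<in> B \<Longrightarrow> y' \<in> B \<Longrightarrow> dist x y = D \<Longrightarrow> dist x y' = D \<Longrightarrow> y = y'"
  using partner_unique[OF AB(6)] Dle by blast

lemma uB: "x \<in> A \<Longrightarrow> x' \<in> A \<Longrightarrow> y \<in> B \<Longrightarrow> dist y x = D \<Longrightarrow> dist y x' = D \<Longrightarrow> x = x'"
proof -
  assume a: "x \<in> A" "x' \<in> A" "y \<in> B" "dist y x = D" "dist y x' = D"
  have "\<forall>z\<in>A. D \<le> dist y z" using Dle a(3) by (simp add: dist_commute)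
  thus "x = x'" using partner_unique[OF AB(5) a(1,2,4,5)] by blast
qed

lemma start: "\<exists>K. K \<in> Sig"
proof -
  define A0 where "A0 = {x\<in>A. \<exists>y\<in>B. dist x y = D}"
  define B0 where "B0 = {y\<in>B. \<exists>x\<in>A. dist y x = D}"
  have d1: "\<forall>a\<in>A. \<forall>b\<in>B. D \<le> dist a b" using Dle by blast
  have d2: "\<forall>a\<in>B. \<forall>b\<in>A. D \<le> dist a b"
  proof (intro ballI)
    fix a b assume "a \<in> B" "b \<in> A"
    thus "D \<le> dist a b" using Dle[of b a] by (simp add: dist_commute)
  qed
  obtain a b where ab: "a \<in> A" "b \<in> B" "dist a b = D"
    using exist_prox[OF AB(1-7)] unfolding D_def by blast
  obtain p M where M: "\<forall>y\<in>B. dist p y \<le> M" using AB(7) unfolding bounded_def by blast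
  have bA0: "bounded A0"
    unfolding bounded_def
  proof (intro exI[of _ p] exI[of _ "M + D"] ballI)
    fix x assume "x \<in> A0"
    then obtain y where y: "y \<in> B" "dist x y = D" unfolding A0_def by blast
    have "dist p x \<le> dist p y + dist y x" by (rule dist_triangle)
    moreover have "dist p y \<le> M" using M y(1) by blast
    moreover have "dist y x = D" using y(2) by (simp add: dist_commute)
    ultimately show "dist p x \<le> M + D" by linarith
  qed
  have "(A0, B0) \<in> Sig"
    unfolding Sig_def
  proof (simp only: mem_Collect_eq case_prod_conv, intro conjI)
    show "A0 \<subseteq> A" "B0 \<subseteq> B" by (auto simp: A0_def B0_def)
    show "A0 \<noteq> {}" using ab unfolding A0_def by blast
    have "dist b a = D" using ab(3) by (simp add: dist_commute)
    hence "b \<in> B0" unfolding B0_def using ab(1,2) by blast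
    thus "B0 \<noteq> {}" by blast
    show "closed A0" unfolding A0_def by (rule partner_closed[OF AB(3) AB(4) AB(6) d1])
    show "closed B0" unfolding B0_def by (rule partner_closed[OF AB(4) AB(3) AB(5) d2])
    show "geod_convex A0" unfolding A0_def by (rule partner_convex[OF AB(5) AB(6) d1])
    show "geod_convex B0" unfolding B0_def by (rule partner_convex[OF AB(6) AB(5) d2])
    show "bounded A0" by (rule bA0)
    show "bounded B0" using AB(7) by (rule bounded_subset) (auto simp: B0_def)
    show "T ` A0 \<subseteq> B0"
    proof
      fix z assume "z \<in> T ` A0"
      then obtain x y where x: "z = T x" "x \<in> A" "y \<in> B" "dist x y = D" unfolding A0_def by blast
      have "T x \<in> B" "T y \<in> A" using TA[OF x(2)] TB[OF x(3)] by auto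
      moreover have "dist (T x) (T y) = D" using Tprox[OF x(2-4)] by (simp add: dist_commute)
      ultimately show "z \<in> B0" unfolding B0_def x(1) by blast
    qed
    show "T ` B0 \<subseteq> A0"
    proof
      fix z assume "z \<in> T ` B0"
      then obtain x y where x: "z = T y" "x \<in> A" "y \<in> B" "dist y x = D" unfolding B0_def by blast
      have "dist x y = D" using x(4) by (simp add: dist_commute)
      hence "dist (T y) (T x) = D" using Tprox[OF x(2,3)] by simp
      moreover have "T x \<in> B" "T y \<in> A" using TA[OF x(2)] TB[OF x(3)] by auto
      ultimately show "z \<in> A0" unfolding A0_def x(1) by blast
    qed
    show "\<forall>x\<in>A0. \<exists>y\<in>B0. dist x y = D"
    proof
      fix x assume "x \<in> A0"
      then obtain y where y: "x \<in> A" "y \<in> B" "dist x y = D" unfolding A0_def by blast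
      have "dist y x = D" using y(3) by (simp add: dist_commute)
      hence "y \<in> B0" unfolding B0_def using y by blast
      thus "\<exists>y\<in>B0. dist x y = D" using y(3) by blast
    qed
    show "\<forall>y\<in>B0. \<exists>x\<in>A0. dist y x = D"
    proof
      fix y assume "y \<in> B0"
      then obtain x where x: "x \<in> A" "y \<in> B" "dist y x = D" unfolding B0_def by blast
      have "dist x y = D" using x(3) by (simp add: dist_commute)
      hence "x \<in> A0" unfolding A0_def using x by blast
      thus "\<exists>x\<in>A0. dist y x = D" using x(3) by blast
    qed
  qed
  thus ?thesis by blast
qed

lemma Sig_D: assumes "(E,H) \<in> Sig"
  shows "E \<subseteq> A" "H \<subseteq> B" "E \<noteq> {}" "H \<noteq> {}" "closed E" "closed H"
   "geod_convex E" "geod_convex H" "bounded E" "bounded H" "T`E \<subseteq> H" "T`H \<subseteq> E"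
   "\<forall>x\<in>E. \<exists>y\<in>H. dist x y = D" "\<forall>y\<in>H. \<exists>x\<in>E. dist y x = D"
  using assms unfolding Sig_def by auto

lemma zorn_min: "\<exists>K1 K2. (K1,K2) \<in> Sig \<and> (\<forall>E H. (E,H) \<in> Sig \<longrightarrow> E \<subseteq> K1 \<longrightarrow> H \<subseteq> K2 \<longrightarrow> E = K1 \<and> H = K2)"
proof -
  define P where "P p q \<longleftrightarrow> fst q \<subseteq> fst p \<and> snd q \<subseteq> snd p" for p q :: "'a set \<times> 'a set"
  have po: "partial_order_on Sig (relation_of P Sig)"
    by (rule partial_order_on_relation_ofI) (auto simp: P_def prod_eq_iff)
  have "\<exists>m\<in>Sig. \<forall>a\<in>Sig. P m a \<longrightarrow> a = m"
  proof (rule predicate_Zorn[OF po])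
    fix C assume C: "C \<in> Chains (relation_of P Sig)"
    have CS: "C \<subseteq> Sig" using C unfolding Chains_def relation_of_def by blast
    have Ctot: "P a b \<or> P b a" if "a \<in> C" "b \<in> C" for a b
      using C that unfolding Chains_def relation_of_def by blast
    show "\<exists>u\<in>Sig. \<forall>a\<in>C. P a u"
    proof (cases "C = {}")
      case True thus ?thesis using start by blast
    next
      case False
      then obtain c0 where c0: "c0 \<in> C" by blast
      define E where "E = \<Inter>(fst ` C)"
      define H where "H = \<Inter>(snd ` C)"
      have mem: "(fst c, snd c) \<in> Sig" if "c \<in> C" for c using CS that by auto
      have E1: "E \<noteq> {}" unfolding E_def
      proof (rule chain_inter)
        show "fst ` C \<noteq> {}" using False by simp
        fix K assume "K \<in> fst ` C"
        then obtain c where c: "c \<in> C" "K = fst c" by blast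
        have m: "(fst c, snd c) \<in> Sig" by (rule mem[OF c(1)])
        show "K \<noteq> {} \<and> closed K \<and> geod_convex K \<and> bounded K"
          using Sig_D(3)[OF m] Sig_D(5)[OF m] Sig_D(7)[OF m] Sig_D(9)[OF m] c(2) by simp
      next
        fix K L assume "K \<in> fst ` C" "L \<in> fst ` C"
        then obtain c d where cd: "c \<in> C" "d \<in> C" "K = fst c" "L = fst d" by blast
        have "P c d \<or> P d c" by (rule Ctot[OF cd(1,2)])
        thus "K \<subseteq> L \<or> L \<subseteq> K" unfolding P_def using cd(3,4) by blast
      qed
      have EA: "E \<subseteq> A" using Sig_D(1)[OF mem[OF c0]] c0 unfolding E_def by blast
      have HB: "H \<subseteq> B" using Sig_D(2)[OF mem[OF c0]] c0 unfolding H_def by blast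
      have partE: "\<exists>y\<in>H. dist x y = D" if x: "x \<in> E" for x
      proof -
        have xc: "x \<in> fst c" if "c \<in> C" for c using x that unfolding E_def by blast
        obtain y where y: "y \<in> snd c0" "dist x y = D" using Sig_D(13)[OF mem[OF c0]] xc[OF c0] by blast
        have "y \<in> snd c" if c: "c \<in> C" for c
        proof -
          obtain y' where y': "y' \<in> snd c" "dist x y' = D" using Sig_D(13)[OF mem[OF c]] xc[OF c] by blast
          have "y' = y" using uA[of x y' y] y y' Sig_D(1,2)[OF mem[OF c]] Sig_D(2)[OF mem[OF c0]] xc[OF c] by blast
          thus ?thesis using y' by simp
        qed
        thus ?thesis using y unfolding H_def by blast
      qed
      have partH: "\<exists>x\<in>E. dist y x = D" if y: "y \<in> H" for y
      proof -
        have yc: "y \<in> snd c" if "c \<in> C" for c using y that unfolding H_def by blast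
        obtain x where x: "x \<in> fst c0" "dist y x = D" using Sig_D(14)[OF mem[OF c0]] yc[OF c0] by blast
        have "x \<in> fst c" if c: "c \<in> C" for c
        proof -
          obtain x' where x': "x' \<in> fst c" "dist y x' = D" using Sig_D(14)[OF mem[OF c]] yc[OF c] by blast
          have "x' = x" using uB[of x' x y] x x' Sig_D(1,2)[OF mem[OF c]] Sig_D(1)[OF mem[OF c0]] yc[OF c] by blast
          thus ?thesis using x' by simp
        qed
        thus ?thesis using x unfolding E_def by blast
      qed
      have "(E, H) \<in> Sig"
        unfolding Sig_def
      proof (simp only: mem_Collect_eq case_prod_conv, intro conjI)
        show "E \<subseteq> A" "H \<subseteq> B" "E \<noteq> {}" by fact+
        show "H \<noteq> {}" using E1 partE by blast
        show "closed E" unfolding E_def by (rule closed_Inter) (use Sig_D(5)[OF mem] in blast)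
        show "closed H" unfolding H_def by (rule closed_Inter) (use Sig_D(6)[OF mem] in blast)
        show "geod_convex E" unfolding E_def using Sig_D(7)[OF mem] by (intro Inter_conv) blast
        show "geod_convex H" unfolding H_def using Sig_D(8)[OF mem] by (intro Inter_conv) blast
        show "bounded E" by (rule bounded_subset[OF Sig_D(9)[OF mem[OF c0]]]) (use c0 in \<open>auto simp: E_def\<close>)
        show "bounded H" by (rule bounded_subset[OF Sig_D(10)[OF mem[OF c0]]]) (use c0 in \<open>auto simp: H_def\<close>)
        show "T ` E \<subseteq> H" unfolding E_def H_def using Sig_D(11)[OF mem] by blast
        show "T ` H \<subseteq> E" unfolding E_def H_def using Sig_D(12)[OF mem] by blast
        show "\<forall>x\<in>E. \<exists>y\<in>H. dist x y = D" using partE by blast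
        show "\<forall>y\<in>H. \<exists>x\<in>E. dist y x = D" using partH by blast
      qed
      moreover have "\<forall>a\<in>C. P a (E, H)" unfolding P_def E_def H_def by auto
      ultimately show ?thesis by blast
    qed
  qed
  then obtain m where m: "m \<in> Sig" "\<forall>a\<in>Sig. P m a \<longrightarrow> a = m" by blast
  show ?thesis
  proof (intro exI conjI allI impI)
    show "(fst m, snd m) \<in> Sig" using m(1) by simp
    fix E H assume "(E, H) \<in> Sig" "E \<subseteq> fst m" "H \<subseteq> snd m"
    hence "(E, H) = m" using m(2) unfolding P_def by auto
    thus "E = fst m" "H = snd m" by auto
  qed
qed

end



context bp
begin

lemma SUB:
  assumes K: "(K1,K2) \<in> Sig" and C: "closed C1" "closed C2" "geod_convex C1" "geod_convex C2"
    and INV: "\<And>x y. x \<in> K1 \<Longrightarrow> x \<in> C1 \<Longrightarrow> y \<in> K2 \<Longrightarrow> y \<in> C2 \<Longrightarrow> dist x y = D \<Longrightarrow> T x \<in> C2 \<and> T y \<in> C1"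
    and NE: "\<exists>x\<in>K1\<inter>C1. \<exists>y\<in>K2\<inter>C2. dist x y = D"
  shows "({x\<in>K1\<inter>C1. \<exists>y\<in>K2\<inter>C2. dist x y = D}, {y\<in>K2\<inter>C2. \<exists>x\<in>K1\<inter>C1. dist y x = D}) \<in> Sig"
proof -
  define S1 where "S1 = {x\<in>K1\<inter>C1. \<exists>y\<in>K2\<inter>C2. dist x y = D}"
  define S2 where "S2 = {y\<in>K2\<inter>C2. \<exists>x\<in>K1\<inter>C1. dist y x = D}"
  have K1A: "K1 \<subseteq> A" and K2B: "K2 \<subseteq> B" using Sig_D(1,2)[OF K] by auto
  have TK1: "T ` K1 \<subseteq> K2" and TK2: "T ` K2 \<subseteq> K1" using Sig_D(11,12)[OF K] by auto
  have d1: "\<forall>a\<in>K1\<inter>C1. \<forall>b\<in>K2\<inter>C2. D \<le> dist a b"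
  proof (intro ballI)
    fix a b assume "a \<in> K1\<inter>C1" "b \<in> K2\<inter>C2"
    thus "D \<le> dist a b" using Dle K1A K2B by blast
  qed
  have d2: "\<forall>a\<in>K2\<inter>C2. \<forall>b\<in>K1\<inter>C1. D \<le> dist a b"
  proof (intro ballI)
    fix a b assume "a \<in> K2\<inter>C2" "b \<in> K1\<inter>C1"
    hence "D \<le> dist b a" using Dle K1A K2B by blast
    thus "D \<le> dist a b" by (simp add: dist_commute)
  qed
  have cl1: "closed (K1\<inter>C1)" "closed (K2\<inter>C2)" using Sig_D(5,6)[OF K] C(1,2) by (auto intro: closed_Int)
  have cv1: "geod_convex (K1\<inter>C1)" "geod_convex (K2\<inter>C2)" using Sig_D(7,8)[OF K] C(3,4) by (auto intro: Int_conv)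
  have "(S1, S2) \<in> Sig"
    unfolding Sig_def
  proof (simp only: mem_Collect_eq case_prod_conv, intro conjI)
    show "S1 \<subseteq> A" using K1A unfolding S1_def by blast
    show "S2 \<subseteq> B" using K2B unfolding S2_def by blast
    show "S1 \<noteq> {}" using NE unfolding S1_def by blast
    show "S2 \<noteq> {}"
    proof -
      obtain x y where xy: "x \<in> K1\<inter>C1" "y \<in> K2\<inter>C2" "dist x y = D" using NE by blast
      have "dist y x = D" using xy(3) by (simp add: dist_commute)
      hence "y \<in> S2" unfolding S2_def using xy by blast
      thus ?thesis by blast
    qed
    show "closed S1" unfolding S1_def by (rule partner_closed[OF cl1 cv1(2) d1])
    show "closed S2" unfolding S2_def by (rule partner_closed[OF cl1(2) cl1(1) cv1(1) d2])
    show "geod_convex S1" unfolding S1_def by (rule partner_convex[OF cv1 d1])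
    show "geod_convex S2" unfolding S2_def by (rule partner_convex[OF cv1(2) cv1(1) d2])
    show "bounded S1" by (rule bounded_subset[OF Sig_D(9)[OF K]]) (auto simp: S1_def)
    show "bounded S2" by (rule bounded_subset[OF Sig_D(10)[OF K]]) (auto simp: S2_def)
    show "T ` S1 \<subseteq> S2"
    proof
      fix z assume "z \<in> T ` S1"
      then obtain x y where x: "z = T x" "x \<in> K1" "x \<in> C1" "y \<in> K2" "y \<in> C2" "dist x y = D"
        unfolding S1_def by blast
      have i: "T x \<in> C2" "T y \<in> C1" using INV[OF x(2-6)] by auto
      have k: "T x \<in> K2" "T y \<in> K1" using TK1 TK2 x(2,4) by auto
      have "dist (T x) (T y) = D" using Tprox[of x y] x K1A K2B by (auto simp: dist_commute)
      thus "z \<in> S2" unfolding S2_def x(1) using i k by blast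
    qed
    show "T ` S2 \<subseteq> S1"
    proof
      fix z assume "z \<in> T ` S2"
      then obtain x y where x: "z = T y" "x \<in> K1" "x \<in> C1" "y \<in> K2" "y \<in> C2" "dist y x = D"
        unfolding S2_def by blast
      have xy: "dist x y = D" using x(6) by (simp add: dist_commute)
      have i: "T x \<in> C2" "T y \<in> C1" using INV[OF x(2-5) xy] by auto
      have k: "T x \<in> K2" "T y \<in> K1" using TK1 TK2 x(2,4) by auto
      have "dist (T y) (T x) = D" using Tprox[of x y] xy x K1A K2B by auto
      thus "z \<in> S1" unfolding S1_def x(1) using i k by blast
    qed
    show "\<forall>x\<in>S1. \<exists>y\<in>S2. dist x y = D"
    proof
      fix x assume "x \<in> S1"
      then obtain y where y: "x \<in> K1\<inter>C1" "y \<in> K2\<inter>C2" "dist x y = D" unfolding S1_def by blast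
      have "dist y x = D" using y(3) by (simp add: dist_commute)
      hence "y \<in> S2" unfolding S2_def using y by blast
      thus "\<exists>y\<in>S2. dist x y = D" using y(3) by blast
    qed
    show "\<forall>y\<in>S2. \<exists>x\<in>S1. dist y x = D"
    proof
      fix y assume "y \<in> S2"
      then obtain x where x: "y \<in> K2\<inter>C2" "x \<in> K1\<inter>C1" "dist y x = D" unfolding S2_def by blast
      have "dist x y = D" using x(3) by (simp add: dist_commute)
      hence "x \<in> S1" unfolding S1_def using x by blast
      thus "\<exists>x\<in>S1. dist y x = D" using x(3) by blast
    qed
  qed
  thus ?thesis unfolding S1_def S2_def .
qed

lemma minimal_diam:
  assumes K: "(K1,K2) \<in> Sig" and minl: "\<forall>E H. (E,H) \<in> Sig \<longrightarrow> E \<subseteq> K1 \<longrightarrow> H \<subseteq> K2 \<longrightarrow> E = K1 \<and> H = K2"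
  shows "\<forall>x\<in>K1. \<forall>y\<in>K2. dist x y \<le> D"
proof (rule ccontr)
  assume "\<not> (\<forall>x\<in>K1. \<forall>y\<in>K2. dist x y \<le> D)"
  then obtain x0 y0 where x0: "x0 \<in> K1" and y0: "y0 \<in> K2" and big: "D < dist x0 y0" by force
  have K1A: "K1 \<subseteq> A" and K2B: "K2 \<subseteq> B" using Sig_D(1,2)[OF K] by auto
  have TK1: "\<And>x. x \<in> K1 \<Longrightarrow> T x \<in> K2" and TK2: "\<And>y. y \<in> K2 \<Longrightarrow> T y \<in> K1"
    using Sig_D(11,12)[OF K] by auto
  obtain M1 where M1: "\<forall>u\<in>K1. dist x0 u \<le> M1" using Sig_D(9)[OF K] bounded_any_center[of K1 x0] by blast
  obtain M2 where M2: "\<forall>v\<in>K2. dist x0 v \<le> M2" using Sig_D(10)[OF K] bounded_any_center[of K2 x0] by blast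
  define f where "f p = dist (fst p) (snd p)" for p :: "'a \<times> 'a"
  define \<Delta> where "\<Delta> = Sup (f ` (K1 \<times> K2))"
  have bdd: "bdd_above (f ` (K1 \<times> K2))"
  proof (rule bdd_aboveI2)
    fix p assume "p \<in> K1 \<times> K2"
    hence "dist x0 (fst p) \<le> M1" "dist x0 (snd p) \<le> M2" using M1 M2 by auto
    moreover have "dist (fst p) (snd p) \<le> dist x0 (fst p) + dist x0 (snd p)" by (rule dist_triangle3)
    ultimately show "f p \<le> M1 + M2" unfolding f_def by linarith
  qed
  have up: "dist u v \<le> \<Delta>" if "u \<in> K1" "v \<in> K2" for u v
    using cSUP_upper[of "(u,v)" "K1 \<times> K2" f, OF _ bdd] that unfolding \<Delta>_def f_def by auto
  have approx: "\<exists>u\<in>K1. \<exists>v\<in>K2. s < dist u v" if "s < \<Delta>" for s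
  proof -
    have "K1 \<times> K2 \<noteq> {}" using x0 y0 by blast
    hence "\<exists>p\<in>K1 \<times> K2. s < f p" using less_cSUP_iff[OF _ bdd] that unfolding \<Delta>_def by blast
    thus ?thesis unfolding f_def by auto
  qed
  obtain x2 where x2: "x2 \<in> K1" "dist y0 x2 = D" using Sig_D(14)[OF K] y0 by blast
  obtain y1 where y1: "y1 \<in> K2" "dist x0 y1 = D" using Sig_D(13)[OF K] x0 by blast
  have ne1: "x0 \<noteq> x2" using x2(2) big by (auto simp: dist_commute)
  have ne2: "y1 \<noteq> y0" using y1(2) big by auto
  obtain c1 l1 where g1: "geodesic_joining c1 l1 x0 x2" using ex_geod by blast
  obtain c2 l2 where g2: "geodesic_joining c2 l2 y1 y0" using ex_geod by blast
  have l: "0 \<le> l1" "0 \<le> l2" using g1 g2 unfolding geodesic_joining_def geodesic_def by auto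
  define m where "m = c1 (l1/2)"
  define m' where "m' = c2 (l2/2)"
  have mK: "m \<in> K1" unfolding m_def using conv_pts[OF Sig_D(7)[OF K] x0 x2(1) g1, of "l1/2"] l by auto
  have m'K: "m' \<in> K2" unfolding m'_def using conv_pts[OF Sig_D(8)[OF K] y1(1) y0 g2, of "l2/2"] l by auto
  have mm: "is_midpoint m x0 x2" unfolding m_def by (rule geod_mid[OF g1])
  have mm': "is_midpoint m' y1 y0" unfolding m'_def by (rule geod_mid[OF g2])
  have "dist (c1 ((1/2)*l1)) (c2 ((1/2)*l2)) \<le> (1 - 1/2) * dist x0 y1 + (1/2) * dist x2 y0"
    by (rule bus_t[OF g1 g2]) auto
  hence "dist m m' \<le> D" using y1(2) x2(2) unfolding m_def m'_def by (simp add: dist_commute)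
  moreover have "D \<le> dist m m'" using Dle mK m'K K1A K2B by blast
  ultimately have dmm: "dist m m' = D" by simp
  have D0: "0 \<le> D" using Dle[of x0 y0] x0 y0 K1A K2B zero_le_dist[of x0 y0] by (simp add: setdist_pos_le D_def)
  have \<Delta>pos: "0 < \<Delta>" using up[OF x0 y0] big D0 by linarith
  define \<epsilon> where "\<epsilon> = min (dist x0 x2) (dist y1 y0)"
  have \<epsilon>: "0 < \<epsilon>" using ne1 ne2 by (simp add: \<epsilon>_def)
  obtain c \<eta> where c: "c > 0" "\<eta> > 0" and h: "\<forall>a x y m R. R \<le> \<Delta> + \<eta> \<longrightarrow> dist x a \<le> R \<longrightarrow> dist y a \<le> R
           \<longrightarrow> \<epsilon> \<le> dist x y \<longrightarrow> is_midpoint m x y \<longrightarrow> dist m (a::'a) \<le> max R \<Delta> - c"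
    using mid_drop[OF \<Delta>pos \<epsilon>] by blast
  define r where "r = \<Delta> - c"
  have mv: "dist v m \<le> r" if v: "v \<in> K2" for v
  proof -
    have "dist x0 v \<le> \<Delta>" "dist x2 v \<le> \<Delta>" using up[OF x0 v] up[OF x2(1) v] by auto
    moreover have "\<epsilon> \<le> dist x0 x2" by (simp add: \<epsilon>_def)
    moreover have "\<Delta> \<le> \<Delta> + \<eta>" using c by simp
    ultimately have "dist m v \<le> max \<Delta> \<Delta> - c" using h mm by blast
    thus ?thesis by (simp add: r_def dist_commute)
  qed
  have m'u: "dist u m' \<le> r" if u: "u \<in> K1" for u
  proof -
    have "dist y1 u \<le> \<Delta>" "dist y0 u \<le> \<Delta>" using up[OF u y1(1)] up[OF u y0] by (auto simp: dist_commute)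
    moreover have "\<epsilon> \<le> dist y1 y0" by (simp add: \<epsilon>_def)
    moreover have "\<Delta> \<le> \<Delta> + \<eta>" using c by simp
    ultimately have "dist m' u \<le> max \<Delta> \<Delta> - c" using h mm' by blast
    thus ?thesis by (simp add: r_def dist_commute)
  qed
  define C1 where "C1 = (\<Inter>v\<in>K2. cball v r)"
  define C2 where "C2 = (\<Inter>u\<in>K1. cball u r)"
  define G1 where "G1 = (\<Inter>u\<in>K1\<inter>C1. cball (T u) r)"
  define G2 where "G2 = (\<Inter>v\<in>K2\<inter>C2. cball (T v) r)"
  have C1_iff: "z \<in> C1 \<longleftrightarrow> (\<forall>v\<in>K2. dist v z \<le> r)" for z by (simp add: C1_def)
  have C2_iff: "z \<in> C2 \<longleftrightarrow> (\<forall>u\<in>K1. dist u z \<le> r)" for z by (simp add: C2_def)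
  have G1_iff: "z \<in> G1 \<longleftrightarrow> (\<forall>u\<in>K1\<inter>C1. dist (T u) z \<le> r)" for z by (simp add: G1_def)
  have G2_iff: "z \<in> G2 \<longleftrightarrow> (\<forall>v\<in>K2\<inter>C2. dist (T v) z \<le> r)" for z by (simp add: G2_def)
  have clo: "closed C1" "closed C2" "closed G1" "closed G2"
    unfolding C1_def C2_def G1_def G2_def by (auto intro!: closed_INT)
  have cvx: "geod_convex C1" "geod_convex C2" "geod_convex G1" "geod_convex G2"
    unfolding C1_def C2_def G1_def G2_def by (auto intro!: Inter_conv cball_conv)
  have TK2G1: "T y \<in> G1" if y: "y \<in> K2" for y
    unfolding G1_iff
  proof
    fix u assume u: "u \<in> K1 \<inter> C1"
    have "dist (T u) (T y) \<le> dist u y" using rne'[of u y] u y K1A K2B by blast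
    also have "\<dots> \<le> r"
    proof -
      have "u \<in> C1" using u by blast
      hence "dist y u \<le> r" using y unfolding C1_iff by blast
      thus ?thesis by (simp add: dist_commute)
    qed
    finally show "dist (T u) (T y) \<le> r" .
  qed
  have TK1G2: "T x \<in> G2" if x: "x \<in> K1" for x
    unfolding G2_iff
  proof
    fix v assume v: "v \<in> K2 \<inter> C2"
    have "dist (T x) (T v) \<le> dist x v" using rne'[of x v] v x K1A K2B by blast
    also have "\<dots> \<le> r"
    proof -
      have "v \<in> C2" using v by blast
      thus ?thesis using x unfolding C2_iff by blast
    qed
    finally show "dist (T v) (T x) \<le> r" by (simp add: dist_commute)
  qed
  have S1: "({x\<in>K1\<inter>G1. \<exists>y\<in>K2\<inter>G2. dist x y = D}, {y\<in>K2\<inter>G2. \<exists>x\<in>K1\<inter>G1. dist y x = D}) \<in> Sig"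
  proof (rule SUB[OF K clo(3,4) cvx(3,4)])
    fix x y assume "x \<in> K1" "x \<in> G1" "y \<in> K2" "y \<in> G2" "dist x y = D"
    thus "T x \<in> G2 \<and> T y \<in> G1" using TK1G2 TK2G1 by blast
  next
    have a: "T y0 \<in> K1 \<inter> G1" using TK2[OF y0] TK2G1[OF y0] by blast
    have b: "T x2 \<in> K2 \<inter> G2" using TK1[OF x2(1)] TK1G2[OF x2(1)] by blast
    have "dist x2 y0 = D" using x2(2) by (simp add: dist_commute)
    hence "dist (T y0) (T x2) = D" using Tprox[of x2 y0] x2(1) y0 K1A K2B by blast
    thus "\<exists>x\<in>K1 \<inter> G1. \<exists>y\<in>K2 \<inter> G2. dist x y = D" using a b by blast
  qed
  have "{x\<in>K1\<inter>G1. \<exists>y\<in>K2\<inter>G2. dist x y = D} = K1"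
    using minl S1 by blast
  hence K1G1: "K1 \<subseteq> G1" by blast
  have "{y\<in>K2\<inter>G2. \<exists>x\<in>K1\<inter>G1. dist y x = D} = K2"
    using minl S1 by blast
  hence K2G2: "K2 \<subseteq> G2" by blast
  have S2: "({x\<in>K1\<inter>C1. \<exists>y\<in>K2\<inter>C2. dist x y = D}, {y\<in>K2\<inter>C2. \<exists>x\<in>K1\<inter>C1. dist y x = D}) \<in> Sig"
  proof (rule SUB[OF K clo(1,2) cvx(1,2)])
    fix x y assume xy: "x \<in> K1" "x \<in> C1" "y \<in> K2" "y \<in> C2" "dist x y = D"
    have "T x \<in> C2" unfolding C2_iff
    proof
      fix u assume "u \<in> K1"
      hence "u \<in> G1" using K1G1 by blast
      hence "dist (T x) u \<le> r" using xy(1,2) unfolding G1_iff by blast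
      thus "dist u (T x) \<le> r" by (simp add: dist_commute)
    qed
    moreover have "T y \<in> C1" unfolding C1_iff
    proof
      fix v assume "v \<in> K2"
      hence "v \<in> G2" using K2G2 by blast
      hence "dist (T y) v \<le> r" using xy(3,4) unfolding G2_iff by blast
      thus "dist v (T y) \<le> r" by (simp add: dist_commute)
    qed
    ultimately show "T x \<in> C2 \<and> T y \<in> C1" by blast
  next
    have "m \<in> C1" unfolding C1_iff using mv by blast
    hence "m \<in> K1 \<inter> C1" using mK by blast
    moreover have "m' \<in> C2" unfolding C2_iff using m'u by blast
    hence "m' \<in> K2 \<inter> C2" using m'K by blast
    ultimately show "\<exists>x\<in>K1 \<inter> C1. \<exists>y\<in>K2 \<inter> C2. dist x y = D" using dmm by blast
  qed
  have "{x\<in>K1\<inter>C1. \<exists>y\<in>K2\<inter>C2. dist x y = D} = K1"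
    using minl S2 by blast
  hence K1C1: "K1 \<subseteq> C1" by blast
  have "r < \<Delta>" using c by (simp add: r_def)
  then obtain u v where uv: "u \<in> K1" "v \<in> K2" "r < dist u v" using approx by blast
  have "u \<in> C1" using K1C1 uv(1) by blast
  hence "dist v u \<le> r" using uv(2) unfolding C1_iff by blast
  thus False using uv(3) by (simp add: dist_commute)
qed

end

theorem mainTheorem5:
  fixes A B :: "'a::complete_space set" and T :: "'a \<Rightarrow> 'a" and \<delta> :: "real \<Rightarrow> real \<Rightarrow> real"
  assumes "geodesic_space TYPE('a)"
    and "busemann_convex TYPE('a)"
    and "modulus_uc TYPE('a) \<delta>"
    and "monotone_modulus \<delta> \<or> lsc_right_modulus \<delta>"
    and "A \<noteq> {}" and "B \<noteq> {}"
    and "closed A" and "closed B" and "geod_convex A" and "geod_convex B"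
    and "bounded B"
    and "cyclic_map T A B"
    and "rel_nonexpansive T A B"
  shows "\<exists>x\<in>A. \<exists>y\<in>B. dist x (T x) = setdist A B \<and> dist y (T y) = setdist A B"
proof -
  interpret bp \<delta> "TYPE('a)" A B T
    by (unfold_locales) (use assms in auto)
  obtain K1 K2 where K: "(K1,K2) \<in> Sig"
    and minl: "\<forall>E H. (E,H) \<in> Sig \<longrightarrow> E \<subseteq> K1 \<longrightarrow> H \<subseteq> K2 \<longrightarrow> E = K1 \<and> H = K2"
    using zorn_min by blast
  have diam: "\<forall>x\<in>K1. \<forall>y\<in>K2. dist x y \<le> D" by (rule minimal_diam[OF K minl])
  obtain x where x: "x \<in> K1" using Sig_D(3)[OF K] by blast
  have xA: "x \<in> A" using x Sig_D(1)[OF K] by blast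
  have TxK: "T x \<in> K2" using x Sig_D(11)[OF K] by blast
  have TxB: "T x \<in> B" by (rule TA[OF xA])
  have TTxA: "T (T x) \<in> A" by (rule TB[OF TxB])
  have "dist x (T x) \<le> D" using diam x TxK by blast
  moreover have "D \<le> dist x (T x)" by (rule Dle[OF xA TxB])
  ultimately have e1: "dist x (T x) = D" by simp
  have "dist (T x) (T (T x)) \<le> dist x (T x)" by (rule rne'[OF xA TxB])
  moreover have "D \<le> dist (T (T x)) (T x)" by (rule Dle[OF TTxA TxB])
  ultimately have e2: "dist (T x) (T (T x)) = D" using e1 by (simp add: dist_commute)
  show ?thesis using xA TxB e1 e2 unfolding D_def by blast
qed

end
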